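(* Let $r\geq 1$, let $\mathbf a=(a_1,\ldots,a_r)$ be positive integers, let $D$ be a positive common multiple of $a_1,\ldots,a_r$, and let $\sigma=a_1+\cdots+a_r$. For an integer $n\geq 0$ put $j=\lceil \frac{n+\sigma}{D}\rceil - r$ and $k= \lfloor \frac{n}{D}\rfloor - \lceil \frac{n+\sigma}{D} \rceil + r$. Then $$ (r-1)!\,p_{\mathbf a}(n) \equiv 0 \pmod{ (j+k+1)(j+k+2)\cdots (j+r-1)}, $$ where an empty product equals $1$.
   Context: $p_{\mathbf a}(n)$ is the number of integer solutions $(x_1,\ldots,x_r)$ of $a_1x_1+\cdots+a_rx_r=n$ with all $x_i\geq 0$. *)

theory Defs
  imports Complex_Main "HOL-Number_Theory.Cong"
begin

definition p_count :: "nat list \<Rightarrow> nat \<Rightarrow> nat" where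
  "p_count a n = card {x :: nat list. length x = length a \<and>
      (\<Sum>i<length a. a ! i * x ! i) = n}"

end

theory Submission
  imports Defs
begin

lemma fact_choose_prod_int: "fact m * int ((N + m) choose m) = (\<Prod>i\<in>{int N+1..int N+int m}. i)"
proof (induction m)
  case 0 then show ?case by simp
next
  case (Suc m)
  have e0: "Suc (N+m) * ((N+m) choose m) = (Suc (N+m) choose Suc m) * Suc m"
    by (rule Suc_times_binomial_eq)
  have e: "int ((N + Suc m) choose Suc m) * (int m + 1) = (int N + int m + 1) * int ((N+m) choose m)"
    using arg_cong[OF e0, of int] by (simp add: algebra_simps)
  have "{int N+1..int N+int (Suc m)} = insert (int N + int m + 1) {int N+1..int N+int m}" by auto
  then have p: "(\<Prod>i\<in>{int N+1..int N+int (Suc m)}. i) = (int N + int m + 1) * (\<Prod>i\<in>{int N+1..int N+int m}. i)" by simp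
  have "fact (Suc m) * int ((N + Suc m) choose Suc m) = fact m * (int ((N + Suc m) choose Suc m) * (int m + 1))"
    by (simp add: fact_Suc algebra_simps)
  also have "\<dots> = (int N + int m + 1) * (fact m * int ((N+m) choose m))" using e by (simp add: algebra_simps)
  finally show ?case using Suc p by simp
qed

theorem corollary2p4:
  fixes a :: "nat list" and D n :: nat
  assumes "length a \<ge> 1"
    and "\<forall>ai\<in>set a. ai > 0"
    and "D > 0"
    and "\<forall>ai\<in>set a. ai dvd D"
  defines "r \<equiv> length a"
    and "\<sigma> \<equiv> sum_list a"
  defines "j \<equiv> \<lceil>(real n + real \<sigma>) / real D\<rceil> - int r"
    and "k \<equiv> \<lfloor>real n / real D\<rfloor> - \<lceil>(real n + real \<sigma>) / real D\<rceil> + int r"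
  shows "[fact (r - 1) * int (p_count a n) = 0] (mod (\<Prod>i\<in>{j+k+1..j + int r - 1}. i))"
proof -
  define c where "c i = D div (a!i)" for i
  have apos: "a!i > 0" if "i < r" for i using assms(2) that r_def by auto
  have ac: "a!i * c i = D" if "i < r" for i
    using assms(4) that r_def c_def by (simp add: nth_mem)
  have cpos: "c i > 0" if "i < r" for i using ac[OF that] assms(3) by (metis gr0I mult_0_right)
  have cleD: "c i \<le> D" if "i < r" for i using ac[OF that] apos[OF that]
    by (metis dvd_imp_le dvd_triv_right cpos[OF that] assms(3))
  define X where "X = {x :: nat list. length x = r \<and> (\<Sum>i<r. a ! i * x ! i) = n}"
  have pc: "p_count a n = card X" unfolding p_count_def X_def r_def by simp
  define g where "g x = map (\<lambda>i. x!i mod c i) [0..<r]" for x :: "nat list"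
  define h where "h x = map (\<lambda>i. x!i div c i) [0..<r]" for x :: "nat list"
  define B where "B = {z :: nat list. set z \<subseteq> {..<D} \<and> length z = r}"
  define F where "F z = {x\<in>X. g x = z}" for z
  define P where "P = (\<Prod>i\<in>{j+k+1..j + int r - 1}. i)"
  have finB: "finite B" unfolding B_def by (rule finite_lists_length_eq) simp
  have finX: "finite X"
  proof (rule finite_subset)
    show "X \<subseteq> {xs. set xs \<subseteq> {..n} \<and> length xs = r}"
    proof
      fix x assume x0: "x \<in> X"
      have "set x \<subseteq> {..n}"
      proof
        fix v assume "v \<in> set x"
        then obtain i where i: "i < r" "x!i = v" using x0 X_def by (auto simp: in_set_conv_nth)
        have "x!i \<le> a!i * x!i" using apos[OF i(1)] by simp
        also have "\<dots> \<le> (\<Sum>i<r. a ! i * x ! i)" by (rule member_le_sum) (use i in auto)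
        finally show "v \<in> {..n}" using x0 i X_def by auto
      qed
      then show "x \<in> {xs. set xs \<subseteq> {..n} \<and> length xs = r}" using x0 X_def by auto
    qed
    show "finite {xs. set xs \<subseteq> {..n} \<and> length xs = r}" by (rule finite_lists_length_eq) simp
  qed
  have gB: "g x \<in> B" for x
    unfolding g_def B_def using cpos cleD
    by (auto simp: in_set_conv_nth) (meson mod_less_divisor order_less_le_trans)
  have Xun: "X = \<Union>(F ` B)" unfolding F_def using gB by auto
  have cardX: "card X = (\<Sum>z\<in>B. card (F z))"
    unfolding Xun by (rule card_UN_disjoint) (use finB finX in \<open>auto simp: F_def\<close>)
  have key: "P dvd fact (r - 1) * int (card (F z))" for z
  proof (cases "F z = {}")
    case True then show ?thesis by simp
  next
    case False
    then obtain x0 where x0: "x0 \<in> F z" by auto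
    have lz: "length z = r" using x0 unfolding F_def g_def by auto
    have znth: "z!i = x!i mod c i" if "x \<in> F z" "i < r" for x i
      using that unfolding F_def g_def by auto
    have zlt: "z!i < c i" if "i < r" for i using znth[OF x0 that] cpos[OF that] by simp
    define w where "w = (\<Sum>i<r. a!i * z!i)"
    have decomp: "n = D * sum_list (h x) + w" if "x \<in> F z" for x
    proof -
      have "n = (\<Sum>i<r. a ! i * x ! i)" using that unfolding F_def X_def by auto
      also have "\<dots> = (\<Sum>i<r. D * (x!i div c i) + a!i * z!i)"
      proof (rule sum.cong)
        fix i assume "i \<in> {..<r}"
        then have i: "i < r" by simp
        have "x!i = c i * (x!i div c i) + z!i" using znth[OF that i] by simp
        then have "a!i * x!i = a!i * c i * (x!i div c i) + a!i * z!i"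
          by (metis distrib_left mult.assoc)
        then show "a ! i * x ! i = D * (x!i div c i) + a!i * z!i" using ac[OF i] by simp
      qed simp
      also have "\<dots> = D * (\<Sum>i<r. x!i div c i) + w"
        by (simp add: sum.distrib sum_distrib_left w_def)
      also have "(\<Sum>i<r. x!i div c i) = sum_list (h x)"
        unfolding h_def by (simp add: sum_list_sum_nth atLeast0LessThan)
      finally show ?thesis .
    qed
    define N where "N = sum_list (h x0)"
    have nDN: "n = D * N + w" using decomp[OF x0] N_def by simp
    define Y where "Y = {y :: nat list. length y = r \<and> sum_list y = N}"
    define e where "e y = map (\<lambda>i. c i * y!i + z!i) [0..<r]" for y :: "nat list"
    have bij: "bij_betw h (F z) Y"
    proof (rule bij_betw_byWitness[where f' = e])
      show "\<forall>x\<in>F z. e (h x) = x"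
      proof
        fix x assume x: "x \<in> F z"
        have lx: "length x = r" using x unfolding F_def X_def by auto
        show "e (h x) = x"
          by (rule nth_equalityI) (auto simp: e_def h_def lx znth[OF x])
      qed
      show "\<forall>y\<in>Y. h (e y) = y"
      proof
        fix y assume y: "y \<in> Y"
        have ly: "length y = r" using y Y_def by auto
        show "h (e y) = y"
          by (rule nth_equalityI) (auto simp: e_def h_def ly zlt cpos)
      qed
      show "h ` F z \<subseteq> Y"
      proof
        fix y assume "y \<in> h ` F z"
        then obtain x where x: "x \<in> F z" "y = h x" by auto
        have "D * sum_list (h x) = D * N" using decomp[OF x(1)] nDN by linarith
        then have s: "sum_list (h x) = N" using assms(3) by auto
        have "length (h x) = r" by (simp add: h_def)
        then show "y \<in> Y" using x(2) s by (simp add: Y_def)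
      qed
      show "e ` Y \<subseteq> F z"
      proof
        fix x assume "x \<in> e ` Y"
        then obtain y where y: "y \<in> Y" "x = e y" by auto
        have ly: "length y = r" and sy: "sum_list y = N" using y Y_def by auto
        have "(\<Sum>i<r. a ! i * x ! i) = (\<Sum>i<r. D * y!i + a!i * z!i)"
        proof (rule sum.cong)
          fix i assume "i \<in> {..<r}"
          then have i: "i < r" by simp
          have "a!i * x!i = a!i * c i * y!i + a!i * z!i" using i y(2)
            by (simp add: e_def distrib_left mult.assoc)
          then show "a ! i * x ! i = D * y!i + a!i * z!i" using ac[OF i] by simp
        qed simp
        also have "\<dots> = D * N + w"
          using sy ly by (simp add: sum.distrib w_def sum_list_sum_nth atLeast0LessThan flip: sum_distrib_left)
        finally have "(\<Sum>i<r. a ! i * x ! i) = n" using nDN by simp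
        moreover have "g x = z"
          by (rule nth_equalityI) (auto simp: g_def y(2) e_def lz zlt cpos)
        ultimately show "x \<in> F z" unfolding F_def X_def using y(2) by (simp add: e_def)
      qed
    qed
    have cardF: "card (F z) = (N + (r - 1)) choose (r - 1)"
    proof -
      have "card (F z) = card Y" using bij by (rule bij_betw_same_card)
      also have "\<dots> = (N + r - 1) choose N" unfolding Y_def using card_length_sum_list by simp
      also have "\<dots> = (N + (r - 1)) choose (r - 1)"
        using assms(1) r_def by (metis Nat.add_diff_assoc binomial_symmetric diff_add_inverse le_add1 le_add2
              add_diff_cancel_left')
      finally show ?thesis .
    qed
    have wle: "w + \<sigma> \<le> r * D"
    proof -
      have "w + \<sigma> = (\<Sum>i<r. a!i * z!i + a!i)"
        by (simp add: w_def \<sigma>_def sum.distrib r_def sum_list_sum_nth atLeast0LessThan)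
      also have "\<dots> \<le> (\<Sum>i<r. D)"
      proof (rule sum_mono)
        fix i assume "i \<in> {..<r}"
        then have i: "i < r" by simp
        have "z!i + 1 \<le> c i" using zlt[OF i] by simp
        then have "a!i * (z!i + 1) \<le> a!i * c i" by (rule mult_left_mono) simp
        then show "a!i * z!i + a!i \<le> D" using ac[OF i] by (simp add: distrib_left)
      qed
      finally show ?thesis by simp
    qed
    have jN: "j \<le> int N"
    proof -
      have "real n + real \<sigma> \<le> real D * (real N + real r)"
        using nDN wle by (simp add: algebra_simps) (metis of_nat_add of_nat_le_iff of_nat_mult add.assoc mult.commute)
      then have "(real n + real \<sigma>) / real D \<le> real_of_int (int N + int r)"
        using assms(3) by (simp add: divide_le_eq mult.commute)
      then have "\<lceil>(real n + real \<sigma>) / real D\<rceil> \<le> int N + int r" by (simp add: ceiling_le_iff)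
      then show ?thesis unfolding j_def by simp
    qed
    have Njk: "int N \<le> j + k"
    proof -
      have "real D * real N \<le> real n" using nDN by (metis le_add1 of_nat_le_iff of_nat_mult)
      then have "real_of_int (int N) \<le> real n / real D" using assms(3) by (simp add: le_divide_eq mult.commute)
      then show ?thesis unfolding j_def k_def by (simp add: le_floor_iff)
    qed
    have "P dvd (\<Prod>i\<in>{int N+1..int N+int (r - 1)}. i)"
      unfolding P_def
      by (rule prod_dvd_prod_subset) (use jN Njk assms(1) r_def in auto)
    also have "\<dots> = fact (r - 1) * int (card (F z))"
      using fact_choose_prod_int[of "r - 1" N] cardF by simp
    finally show ?thesis .
  qed
  have "fact (r - 1) * int (p_count a n) = (\<Sum>z\<in>B. fact (r - 1) * int (card (F z)))"
    by (simp add: pc cardX sum_distrib_left)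
  also have "P dvd \<dots>" by (rule dvd_sum) (use key in auto)
  finally show ?thesis unfolding P_def by (simp add: cong_0_iff)
qed

end
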